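(* Let $F \leq F' \leq \hat F \leq \mathrm{Sym}(\Omega)$ be permutation groups (so $F'$ stabilizes the orbits of $F$), and assume that for every $a\in\Omega$ the point stabilizer $F_a$ is equal to its normalizer in $F'_a$. Then for every compact open subgroup $K$ of $U(F)$, one has $\mathrm{Comm}_{U(F')}(K) = G(F,F')$.
   Context: Standing notation. $\Omega$ is a finite set with $d=|\Omega|\geq 3$, $\mathcal{T}_d$ is the $d$-regular tree with vertex set $V$ and set $E$ of non-oriented edges, and $\mathrm{Aut}(\mathcal{T}_d)$ carries the permutation topology. Fix a coloring $c:E\to\Omega$ such that for every vertex $v$ its restriction $c_v$ to the set $E(v)$ of edges containing $v$ is a bijection onto $\Omega$. For $g\in\mathrm{Aut}(\mathcal{T}_d)$ and $v\in V$, the local permutation is $\sigma(g,v)=c_{gv}\circ g_v\circ c_v^{-1}\in\mathrm{Sym}(\Omega)$, where $g_v:E(v)\to E(gv)$ is induced by $g$. For $F\leq\mathrm{Sym}(\Omega)$: $U(F)=\{g:\sigma(g,v)\in F \ \forall v\}$ (a closed subgroup of $\mathrm{Aut}(\mathcal{T}_d)$, with the induced topology); $G(F)=\{g:\sigma(g,v)\in F \text{ for all but finitely many } v\}$; $\hat F$ is the subgroup of permutations preserving each $F$-orbit. For $F\leq F'\leq\hat F$, $G(F,F')=G(F)\cap U(F')$. $F_a$, $F'_a$ are stabilizers of $a$. For a profinite group $K$ contained in a group $L$, the relative commensurator $\mathrm{Comm}_L(K)$ is the set of $g\in L$ such that there are open subgroups $K_1,K_2\leq K$ with $gK_1g^{-1}=K_2$.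 *)

theory Defs
  imports "HOL-Analysis.Analysis" "HOL-Algebra.Bij"
begin

text \<open>Model: Omega is a finite type 'a. The vertices of the |Omega|-regular tree are the
reduced words over Omega (no two consecutive equal letters); the word w is adjacent to
w @ [a] (for a different from the last letter of w), and this edge has colour a.
This is a legal colouring: at every vertex the colours of incident edges are
in bijection with Omega.\<close>

definition reduced :: "'a list \<Rightarrow> bool" where
  "reduced w \<longleftrightarrow> (\<forall>i. Suc i < length w \<longrightarrow> w ! i \<noteq> w ! Suc i)"

definition TV :: "'a list set" where
  "TV = {w. reduced w}"

definition tadj :: "'a list \<Rightarrow> 'a list \<Rightarrow> bool" where
  "tadj u w \<longleftrightarrow> u \<in> TV \<and> w \<in> TV \<and> ((\<exists>a. w = u @ [a]) \<or> (\<exists>a. u = w @ [a]))"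

definition ecol :: "'a list \<Rightarrow> 'a list \<Rightarrow> 'a" where
  "ecol u w = (if length u < length w then last w else last u)"

definition nbr :: "'a list \<Rightarrow> 'a \<Rightarrow> 'a list" where
  "nbr v a = (if v \<noteq> [] \<and> last v = a then butlast v else v @ [a])"

definition Aut :: "('a list \<Rightarrow> 'a list) set" where
  "Aut = {g. bij_betw g TV TV \<and> (\<forall>u\<in>TV. \<forall>w\<in>TV. tadj u w \<longleftrightarrow> tadj (g u) (g w))
             \<and> (\<forall>x. x \<notin> TV \<longrightarrow> g x = x)}"

definition aut_group :: "('a list \<Rightarrow> 'a list) monoid" where
  "aut_group = (BijGroup (UNIV :: 'a list set))\<lparr>carrier := Aut\<rparr>"

text \<open>local permutation sigma(g,v) = c_{gv} o g_v o c_v^{-1}\<close>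
definition sigma :: "('a list \<Rightarrow> 'a list) \<Rightarrow> 'a list \<Rightarrow> 'a \<Rightarrow> 'a" where
  "sigma g v = (\<lambda>a. ecol (g v) (g (nbr v a)))"

text \<open>Sym(Omega) is BijGroup UNIV; F \<le> Sym(Omega) is subgroup F (BijGroup UNIV).\<close>

definition hatF :: "('a \<Rightarrow> 'a) set \<Rightarrow> ('a \<Rightarrow> 'a) set" where
  "hatF F = {p \<in> Bij (UNIV :: 'a set). \<forall>a. \<exists>f\<in>F. p a = f a}"

definition stab :: "('a \<Rightarrow> 'a) set \<Rightarrow> 'a \<Rightarrow> ('a \<Rightarrow> 'a) set" where
  "stab F a = {f \<in> F. f a = a}"

definition normalizer_in :: "('a \<Rightarrow> 'a) set \<Rightarrow> ('a \<Rightarrow> 'a) set \<Rightarrow> ('a \<Rightarrow> 'a) set" where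
  "normalizer_in L H = {p \<in> L. (\<lambda>f. p \<circ> f \<circ> Hilbert_Choice.inv p) ` H = H}"

definition UF :: "('a \<Rightarrow> 'a) set \<Rightarrow> ('a list \<Rightarrow> 'a list) set" where
  "UF F = {g \<in> Aut. \<forall>v\<in>TV. sigma g v \<in> F}"

definition GF :: "('a \<Rightarrow> 'a) set \<Rightarrow> ('a list \<Rightarrow> 'a list) set" where
  "GF F = {g \<in> Aut. finite {v \<in> TV. sigma g v \<notin> F}}"

definition GFF :: "('a \<Rightarrow> 'a) set \<Rightarrow> ('a \<Rightarrow> 'a) set \<Rightarrow> ('a list \<Rightarrow> 'a list) set" where
  "GFF F F' = GF F \<inter> UF F'"

text \<open>The permutation topology = topology of pointwise convergence on the discrete
vertex set; Aut carries the subspace topology of the product of discrete spaces.\<close>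
definition perm_top :: "('a list \<Rightarrow> 'a list) topology" where
  "perm_top = product_topology (\<lambda>_. discrete_topology UNIV) UNIV"

definition compact_open_subgroup_UF :: "('a \<Rightarrow> 'a) set \<Rightarrow> ('a list \<Rightarrow> 'a list) set \<Rightarrow> bool" where
  "compact_open_subgroup_UF F K \<longleftrightarrow>
     K \<subseteq> UF F \<and> subgroup K aut_group \<and>
     compactin (subtopology perm_top (UF F)) K \<and> openin (subtopology perm_top (UF F)) K"

definition open_subgroup_of :: "('a list \<Rightarrow> 'a list) set \<Rightarrow> ('a list \<Rightarrow> 'a list) set \<Rightarrow> bool" where
  "open_subgroup_of K H \<longleftrightarrow> H \<subseteq> K \<and> subgroup H aut_group \<and> openin (subtopology perm_top K) H"

definition Comm :: "('a list \<Rightarrow> 'a list) set \<Rightarrow> ('a list \<Rightarrow> 'a list) set \<Rightarrow> ('a list \<Rightarrow> 'a list) set" where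
  "Comm L K = {g \<in> L. \<exists>K1 K2. open_subgroup_of K K1 \<and> open_subgroup_of K K2 \<and>
      (\<lambda>k. g \<otimes>\<^bsub>aut_group\<^esub> k \<otimes>\<^bsub>aut_group\<^esub> inv\<^bsub>aut_group\<^esub> g) ` K1 = K2}"

end

theory Submission
  imports Defs
begin


abbreviation hinv :: "('b \<Rightarrow> 'c) \<Rightarrow> 'c \<Rightarrow> 'b" where "hinv \<equiv> Hilbert_Choice.inv"

lemma reduced_snoc: "reduced (w @ [a]) \<longleftrightarrow> reduced w \<and> (w \<noteq> [] \<longrightarrow> last w \<noteq> a)"
proof
  assume r: "reduced (w @ [a])"
  have 1: "reduced w"
    unfolding reduced_def
  proof (intro allI impI)
    fix i assume "Suc i < length w"
    then show "w ! i \<noteq> w ! Suc i" using r[unfolded reduced_def, rule_format, of i]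
      by (simp add: nth_append)
  qed
  have 2: "last w \<noteq> a" if "w \<noteq> []"
  proof -
    have "Suc (length w - 1) < length (w @ [a])" using that by simp
    then have "(w@[a]) ! (length w - 1) \<noteq> (w@[a]) ! Suc (length w - 1)"
      using r[unfolded reduced_def] by blast
    then show ?thesis using that by (simp add: nth_append last_conv_nth)
  qed
  show "reduced w \<and> (w \<noteq> [] \<longrightarrow> last w \<noteq> a)" using 1 2 by blast
next
  assume r: "reduced w \<and> (w \<noteq> [] \<longrightarrow> last w \<noteq> a)"
  show "reduced (w @ [a])"
    unfolding reduced_def
  proof (intro allI impI)
    fix i assume i: "Suc i < length (w @ [a])"
    show "(w @ [a]) ! i \<noteq> (w @ [a]) ! Suc i"
    proof (cases "Suc i < length w")
      case True
      then show ?thesis using r by (simp add: nth_append reduced_def)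
    next
      case False
      then have "Suc i = length w" using i by simp
      then have "i = length w - 1" "w \<noteq> []" by auto
      then show ?thesis using r by (auto simp: nth_append last_conv_nth)
    qed
  qed
qed

lemma reduced_butlast: "reduced w \<Longrightarrow> reduced (butlast w)"
  by (cases w rule: rev_cases) (auto simp: reduced_snoc)

lemma nbr_TV: "v \<in> TV \<Longrightarrow> nbr v a \<in> TV"
  by (auto simp: TV_def nbr_def reduced_snoc reduced_butlast)

lemma ecol_nbr: "ecol u (nbr u c) = c"
  by (cases u rule: rev_cases) (auto simp: ecol_def nbr_def)

lemma tadj_nbr: "u \<in> TV \<Longrightarrow> w \<in> TV \<Longrightarrow> tadj u w \<longleftrightarrow> (\<exists>b. w = nbr u b)"
proof
  assume u: "u \<in> TV" and w: "w \<in> TV" and t: "tadj u w"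
  from t consider (a) a where "w = u @ [a]" | (b) a where "u = w @ [a]" unfolding tadj_def by blast
  then show "\<exists>b. w = nbr u b"
  proof cases
    case a
    then have "u \<noteq> [] \<longrightarrow> last u \<noteq> a" using w by (simp add: TV_def reduced_snoc)
    then show ?thesis using a by (auto simp: nbr_def)
  next
    case b
    then show ?thesis by (auto simp: nbr_def)
  qed
next
  assume u: "u \<in> TV" and w: "w \<in> TV" and e: "\<exists>b. w = nbr u b"
  then obtain b where b: "w = nbr u b" by blast
  show "tadj u w"
  proof (cases "u \<noteq> [] \<and> last u = b")
    case True
    then have "u = w @ [b]" using b append_butlast_last_id[of u] by (auto simp: nbr_def)
    then show ?thesis using u w by (auto simp: tadj_def)
  next
    case False
    then have "w = u @ [b]" using b by (auto simp: nbr_def)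
    then show ?thesis using u w by (auto simp: tadj_def)
  qed
qed

lemma aut_TV: "g \<in> Aut \<Longrightarrow> x \<in> TV \<Longrightarrow> g x \<in> TV"
  unfolding Aut_def by (drule CollectD, elim conjE, erule bij_betw_apply)

lemma aut_out: "g \<in> Aut \<Longrightarrow> x \<notin> TV \<Longrightarrow> g x = x"
  unfolding Aut_def by simp

lemma aut_adj: "g \<in> Aut \<Longrightarrow> u \<in> TV \<Longrightarrow> w \<in> TV \<Longrightarrow> tadj (g u) (g w) \<longleftrightarrow> tadj u w"
  unfolding Aut_def by simp

lemma aut_bij: assumes g: "g \<in> Aut" shows "bij g"
proof -
  have bb: "bij_betw g TV TV" using g by (simp add: Aut_def)
  have "inj g"
  proof (rule injI)
    fix x y assume e: "g x = g y"
    show "x = y"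
    proof (cases "x \<in> TV")
      case True
      then have "g x \<in> TV" using aut_TV[OF g] by blast
      then have "y \<in> TV" using e aut_out[OF g, of y] by (cases "y \<in> TV") auto
      then show ?thesis using True bb e by (auto simp: bij_betw_def inj_on_def)
    next
      case False
      then have "g x = x" using aut_out[OF g] by blast
      then have "y \<notin> TV" using e False aut_TV[OF g, of y] by auto
      then show ?thesis using e \<open>g x = x\<close> aut_out[OF g, of y] by simp
    qed
  qed
  moreover have "surj g"
  proof -
    have "y \<in> range g" for y
    proof (cases "y \<in> TV")
      case True
      then have "y \<in> g ` TV" using bb by (simp add: bij_betw_def)
      then show ?thesis by blast
    next
      case False
      then have "y = g y" using aut_out[OF g] by simp
      then show ?thesis by (rule range_eqI)
    qed
    then show ?thesis by blast
  qed
  ultimately show ?thesis by (simp add: bij_def)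
qed

lemma AutI:
  assumes "\<And>x. h (g x) = x" "\<And>x. g (h x) = x" "\<And>x. x \<in> TV \<Longrightarrow> g x \<in> TV"
    "\<And>x. x \<in> TV \<Longrightarrow> h x \<in> TV" "\<And>x. x \<notin> TV \<Longrightarrow> g x = x"
    "\<And>u w. u \<in> TV \<Longrightarrow> w \<in> TV \<Longrightarrow> tadj u w \<Longrightarrow> tadj (g u) (g w)"
    "\<And>u w. u \<in> TV \<Longrightarrow> w \<in> TV \<Longrightarrow> tadj u w \<Longrightarrow> tadj (h u) (h w)"
  shows "g \<in> Aut"
proof -
  have "bij_betw g TV TV"
  proof (rule bij_betw_byWitness[where f'=h])
    show "\<forall>a\<in>TV. h (g a) = a" using assms(1) by simp
    show "\<forall>a'\<in>TV. g (h a') = a'" using assms(2) by simp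
    show "g ` TV \<subseteq> TV" using assms(3) by blast
    show "h ` TV \<subseteq> TV" using assms(4) by blast
  qed
  moreover have "tadj u w \<longleftrightarrow> tadj (g u) (g w)" if "u \<in> TV" "w \<in> TV" for u w
  proof
    assume "tadj u w" then show "tadj (g u) (g w)" using assms(6) that by blast
  next
    assume "tadj (g u) (g w)"
    then have "tadj (h (g u)) (h (g w))" using assms(7) assms(3) that by blast
    then show "tadj u w" using assms(1) by simp
  qed
  ultimately show ?thesis using assms(5) by (auto simp: Aut_def)
qed

lemma id_Aut: "id \<in> Aut"
  by (rule AutI[where h=id]) auto

lemma inv_Aut: assumes g: "g \<in> Aut" shows "hinv g \<in> Aut"
proof -
  have b: "bij g" using aut_bij[OF g] .
  have s: "x \<in> TV \<Longrightarrow> hinv g x \<in> TV" for x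
  proof -
    assume x: "x \<in> TV"
    then obtain y where "y \<in> TV" "x = g y" using g unfolding Aut_def bij_betw_def by blast
    then show ?thesis using b by (simp add: bij_is_inj)
  qed
  show ?thesis
  proof (rule AutI[where h=g])
    show "hinv g (g x) = x" for x using b by (simp add: bij_is_inj)
    show "g (hinv g x) = x" for x using b by (simp add: bij_is_surj surj_f_inv_f)
    show "x \<in> TV \<Longrightarrow> hinv g x \<in> TV" for x using s .
    show "x \<in> TV \<Longrightarrow> g x \<in> TV" for x using aut_TV[OF g] .
    show "hinv g x = x" if "x \<notin> TV" for x
      using aut_out[OF g that] b by (metis bij_is_inj inv_f_f)
    show "tadj (g u) (g w)" if "u \<in> TV" "w \<in> TV" "tadj u w" for u w using aut_adj[OF g] that by blast
    show "tadj (hinv g u) (hinv g w)" if "u \<in> TV" "w \<in> TV" "tadj u w" for u w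
    proof -
      have "tadj (g (hinv g u)) (g (hinv g w))" using that b by (simp add: bij_is_surj surj_f_inv_f)
      then show ?thesis using aut_adj[OF g s s] that by blast
    qed
  qed
qed

lemma comp_Aut: assumes g: "g \<in> Aut" and k: "k \<in> Aut" shows "g \<circ> k \<in> Aut"
  unfolding Aut_def
proof (intro CollectI conjI ballI allI impI)
  show "bij_betw (g \<circ> k) TV TV" using g k unfolding Aut_def using bij_betw_trans by blast
  show "tadj u w \<longleftrightarrow> tadj ((g \<circ> k) u) ((g \<circ> k) w)" if "u \<in> TV" "w \<in> TV" for u w
    using aut_adj[OF g] aut_adj[OF k] aut_TV[OF k] that by simp
  show "(g \<circ> k) x = x" if "x \<notin> TV" for x using aut_out[OF g] aut_out[OF k] that by simp
qed

lemma aut_nbr: assumes g: "g \<in> Aut" and v: "v \<in> TV" shows "g (nbr v a) = nbr (g v) (sigma g v a)"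
proof -
  have "tadj v (nbr v a)" using tadj_nbr[OF v nbr_TV[OF v]] by blast
  then have "tadj (g v) (g (nbr v a))" using aut_adj[OF g v nbr_TV[OF v]] by blast
  then obtain b where b: "g (nbr v a) = nbr (g v) b"
    using tadj_nbr[OF aut_TV[OF g v] aut_TV[OF g nbr_TV[OF v]]] by blast
  have "sigma g v a = b" unfolding sigma_def b ecol_nbr ..
  then show ?thesis using b by simp
qed

lemma sigma_comp: assumes h: "h \<in> Aut" and w: "w \<in> TV"
  shows "sigma (g \<circ> h) w = sigma g (h w) \<circ> sigma h w"
proof (rule ext)
  fix a
  have "sigma (g \<circ> h) w a = ecol (g (h w)) (g (h (nbr w a)))" by (simp add: sigma_def)
  also have "\<dots> = ecol (g (h w)) (g (nbr (h w) (sigma h w a)))" by (simp only: aut_nbr[OF h w])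
  also have "\<dots> = sigma g (h w) (sigma h w a)" by (simp only: sigma_def)
  finally show "sigma (g \<circ> h) w a = (sigma g (h w) \<circ> sigma h w) a" by simp
qed

lemma sigma_eqI: "(\<And>b. k (nbr w b) = nbr (k w) (f b)) \<Longrightarrow> sigma k w = f"
  by (rule ext) (simp add: sigma_def ecol_nbr)

lemma sigma_id: "sigma id w = id"
  by (rule sigma_eqI) simp

lemma sigma_inv: assumes g: "g \<in> Aut" and w: "w \<in> TV"
  shows "sigma (hinv g) (g w) \<circ> sigma g w = id" "sigma g w \<circ> sigma (hinv g) (g w) = id"
proof -
  have b: "bij g" by (rule aut_bij[OF g])
  have "hinv g \<circ> g = id" using b by (simp add: bij_is_inj)
  then have "sigma (hinv g \<circ> g) w = id" by (simp add: sigma_id)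
  then show "sigma (hinv g) (g w) \<circ> sigma g w = id" using sigma_comp[OF g w] by simp
  have "g \<circ> hinv g = id" using b surj_iff bij_is_surj by blast
  then have "sigma (g \<circ> hinv g) (g w) = id" by (simp add: sigma_id)
  then show "sigma g w \<circ> sigma (hinv g) (g w) = id"
    using sigma_comp[OF inv_Aut[OF g] aut_TV[OF g w], of g] b by (simp add: bij_is_inj)
qed

lemma sigma_inv': assumes g: "g \<in> Aut" and w: "w \<in> TV"
  shows "sigma (hinv g) (g w) = hinv (sigma g w)" "bij (sigma g w)"
proof -
  note s = sigma_inv[OF g w]
  show "bij (sigma g w)" using s by (rule o_bij)
  show "sigma (hinv g) (g w) = hinv (sigma g w)"
    using inv_unique_comp[OF s(2) s(1)] by simp
qed



lemma Bij_UNIV: "Bij (UNIV::'b set) = {f. bij f}"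
  by (auto simp: Bij_def extensional_def)

lemma BG_mult: "f \<in> Bij UNIV \<Longrightarrow> g \<in> Bij UNIV \<Longrightarrow> f \<otimes>\<^bsub>BijGroup UNIV\<^esub> g = f \<circ> g"
  by (simp add: BijGroup_def compose_def restrict_UNIV comp_def)

lemma BG_one: "\<one>\<^bsub>BijGroup UNIV\<^esub> = id"
  by (simp add: BijGroup_def restrict_UNIV id_def)

lemma BG_inv: "f \<in> Bij UNIV \<Longrightarrow> inv\<^bsub>BijGroup UNIV\<^esub> f = hinv f"
  by (simp add: inv_BijGroup restrict_UNIV)

lemma subgroup_Aut: "subgroup Aut (BijGroup UNIV)"
proof (rule group.subgroupI[OF group_BijGroup])
  show "Aut \<subseteq> carrier (BijGroup UNIV)" using aut_bij by (auto simp: BijGroup_def Bij_UNIV)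
  show "Aut \<noteq> {}" using id_Aut by blast
  show "inv\<^bsub>BijGroup UNIV\<^esub> a \<in> Aut" if "a \<in> Aut" for a
  proof -
    have "a \<in> Bij UNIV" using that aut_bij by (simp add: Bij_UNIV)
    then show ?thesis using that inv_Aut by (simp add: BG_inv)
  qed
  show "a \<otimes>\<^bsub>BijGroup UNIV\<^esub> b \<in> Aut" if "a \<in> Aut" "b \<in> Aut" for a b
  proof -
    have "a \<in> Bij UNIV" "b \<in> Bij UNIV" using that aut_bij by (simp_all add: Bij_UNIV)
    then show ?thesis using that comp_Aut by (simp add: BG_mult)
  qed
qed

lemma group_aut: "group aut_group"
  unfolding aut_group_def by (rule subgroup.subgroup_is_group[OF subgroup_Aut group_BijGroup])

lemma carrier_aut: "carrier aut_group = Aut"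
  by (simp add: aut_group_def)

lemma aut_mult: assumes "g \<in> Aut" "k \<in> Aut" shows "g \<otimes>\<^bsub>aut_group\<^esub> k = g \<circ> k"
proof -
  have "g \<in> Bij UNIV" "k \<in> Bij UNIV" using assms aut_bij by (simp_all add: Bij_UNIV)
  then show ?thesis by (simp add: aut_group_def BG_mult)
qed

lemma aut_one: "\<one>\<^bsub>aut_group\<^esub> = id"
  by (simp add: aut_group_def BG_one)

lemma aut_inv: assumes g: "g \<in> Aut" shows "inv\<^bsub>aut_group\<^esub> g = hinv g"
proof (rule group.inv_equality[OF group_aut])
  show "hinv g \<otimes>\<^bsub>aut_group\<^esub> g = \<one>\<^bsub>aut_group\<^esub>"
    using aut_bij[OF g] by (simp add: aut_mult g inv_Aut aut_one bij_is_inj)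
  show "g \<in> carrier aut_group" using g by (simp add: carrier_aut)
  show "hinv g \<in> carrier aut_group" using g inv_Aut by (simp add: carrier_aut)
qed

locale permgrp =
  fixes F :: "('a::finite \<Rightarrow> 'a) set"
  assumes sg: "subgroup F (BijGroup (UNIV :: 'a set))"
begin

lemma F_bij: "f \<in> F \<Longrightarrow> bij f"
  using subgroup.subset[OF sg] by (auto simp: BijGroup_def Bij_UNIV)

lemma F_comp: assumes "f \<in> F" "g \<in> F" shows "f \<circ> g \<in> F"
proof -
  have "f \<in> Bij UNIV" "g \<in> Bij UNIV" using assms F_bij by (auto simp: Bij_UNIV)
  then have "f \<otimes>\<^bsub>BijGroup UNIV\<^esub> g = f \<circ> g" by (rule BG_mult)
  then show ?thesis using subgroup.m_closed[OF sg assms] by simp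
qed

lemma F_id: "id \<in> F"
  using subgroup.one_closed[OF sg] by (simp add: BG_one)

lemma F_inv: assumes "f \<in> F" shows "hinv f \<in> F"
proof -
  have "f \<in> Bij UNIV" using assms F_bij by (auto simp: Bij_UNIV)
  then have "inv\<^bsub>BijGroup UNIV\<^esub> f = hinv f" by (rule BG_inv)
  then show ?thesis using subgroup.m_inv_closed[OF sg assms] by simp
qed

lemma UF_comp: assumes k1: "k1 \<in> UF F" and k2: "k2 \<in> UF F" shows "k1 \<circ> k2 \<in> UF F"
proof -
  have a1: "k1 \<in> Aut" and a2: "k2 \<in> Aut" using k1 k2 by (simp_all add: UF_def)
  have "sigma (k1 \<circ> k2) v \<in> F" if v: "v \<in> TV" for v
  proof -
    have "sigma k1 (k2 v) \<in> F" using k1 aut_TV[OF a2 v] by (simp add: UF_def)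
    moreover have "sigma k2 v \<in> F" using k2 v by (simp add: UF_def)
    ultimately show ?thesis using sigma_comp[OF a2 v, of k1] F_comp by simp
  qed
  then show ?thesis using comp_Aut[OF a1 a2] by (simp add: UF_def)
qed

lemma UF_id: "id \<in> UF F"
proof -
  have "sigma id v \<in> F" for v :: "'a list" using F_id by (simp add: sigma_id)
  then show ?thesis using id_Aut by (simp add: UF_def)
qed

lemma sigma_inv_any: assumes k: "k \<in> Aut" and v: "v \<in> TV"
  shows "sigma (hinv k) v = hinv (sigma k (hinv k v))"
proof -
  have b: "bij k" using aut_bij[OF k] .
  have w: "hinv k v \<in> TV" using inv_Aut[OF k] v aut_TV by blast
  have "k (hinv k v) = v" using b by (simp add: bij_is_surj surj_f_inv_f)
  then show ?thesis using sigma_inv'(1)[OF k w] by simp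
qed

lemma UF_inv: assumes k: "k \<in> UF F" shows "hinv k \<in> UF F"
proof -
  have ka: "k \<in> Aut" using k by (simp add: UF_def)
  have "sigma (hinv k) v \<in> F" if v: "v \<in> TV" for v
  proof -
    have w: "hinv k v \<in> TV" using inv_Aut[OF ka] v aut_TV by blast
    then have "sigma k (hinv k v) \<in> F" using k by (simp add: UF_def)
    then show ?thesis using sigma_inv_any[OF ka v] F_inv by simp
  qed
  then show ?thesis using inv_Aut[OF ka] by (simp add: UF_def)
qed

definition FixU :: "'a list set \<Rightarrow> ('a list \<Rightarrow> 'a list) set" where
  "FixU X = {k \<in> UF F. \<forall>x\<in>X. k x = x}"

lemma FixU_subgroup: "subgroup (FixU X) aut_group"
proof (rule group.subgroupI[OF group_aut])
  show "FixU X \<subseteq> carrier aut_group" by (auto simp: FixU_def UF_def carrier_aut)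
  show "FixU X \<noteq> {}" using UF_id by (auto simp: FixU_def)
  show "inv\<^bsub>aut_group\<^esub> a \<in> FixU X" if a: "a \<in> FixU X" for a
  proof -
    have aa: "a \<in> Aut" using a by (simp add: FixU_def UF_def)
    have "hinv a x = x" if "x \<in> X" for x
    proof -
      have "a x = x" using a that by (simp add: FixU_def)
      then have "hinv a (a x) = hinv a x" by simp
      then show ?thesis using aut_bij[OF aa] by (simp add: bij_is_inj)
    qed
    then show ?thesis using a UF_inv by (simp add: aut_inv[OF aa] FixU_def)
  qed
  show "a \<otimes>\<^bsub>aut_group\<^esub> b \<in> FixU X" if "a \<in> FixU X" "b \<in> FixU X" for a b
    using that UF_comp by (auto simp: FixU_def aut_mult UF_def)
qed

end



lemma open_fix1: "openin perm_top {f. f (a::'a list) = a}"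
proof -
  have "continuous_map perm_top (discrete_topology UNIV) (\<lambda>f. f a)"
    unfolding perm_top_def by (rule continuous_map_product_projection) simp
  then have "openin perm_top {f \<in> topspace perm_top. f a \<in> {a}}"
    by (rule openin_continuous_map_preimage) simp
  moreover have "topspace (perm_top :: ('a list \<Rightarrow> 'a list) topology) = UNIV" by (simp add: perm_top_def)
  ultimately show ?thesis by simp
qed

lemma open_fix: "finite X \<Longrightarrow> openin perm_top {f. \<forall>x\<in>(X::'a list set). f x = x}"
proof (induction X rule: finite_induct)
  case empty
  have "topspace (perm_top :: ('a list \<Rightarrow> 'a list) topology) = UNIV" by (simp add: perm_top_def)
  then have "{f. \<forall>x\<in>({}::'a list set). f x = x} = topspace perm_top" by simp
  then show ?case by (simp only: openin_topspace)
next
  case (insert a X)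
  have "{f. \<forall>x\<in>insert a X. f x = x} = {f. f a = a} \<inter> {f. \<forall>x\<in>X. f x = x}" by auto
  then show ?case using openin_Int[OF open_fix1 insert.IH] by simp
qed

lemma extract_fix:
  assumes o: "openin (subtopology perm_top U) H" and i: "id \<in> H"
  shows "\<exists>X. finite X \<and> {f \<in> U. \<forall>x\<in>X. f x = x} \<subseteq> H"
proof -
  obtain T where T: "openin perm_top T" "H = T \<inter> U" using o by (auto simp: openin_subtopology)
  then have "id \<in> T" using i by blast
  then obtain V where V: "finite {i \<in> UNIV. V i \<noteq> topspace (discrete_topology UNIV)}"
     "id \<in> Pi\<^sub>E UNIV V" "Pi\<^sub>E UNIV V \<subseteq> T"
    using T(1) unfolding perm_top_def openin_product_topology_alt by blast
  define X where "X = {i. V i \<noteq> UNIV}"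
  have fX: "finite X" using V(1) by (simp add: X_def)
  have "f \<in> T" if "\<forall>x\<in>X. f x = x" for f
  proof -
    have "f i \<in> V i" for i
    proof (cases "i \<in> X")
      case True
      then have "f i = i" using that by blast
      moreover have "id i \<in> V i" using V(2) by (simp add: PiE_iff)
      ultimately show ?thesis by simp
    next
      case False then show ?thesis by (simp add: X_def)
    qed
    then have "f \<in> Pi\<^sub>E UNIV V" by (simp add: PiE_iff)
    then show ?thesis using V(3) by blast
  qed
  then have "{f \<in> U. \<forall>x\<in>X. f x = x} \<subseteq> H" using T(2) by blast
  then show ?thesis using fX by blast
qed

context permgrp begin

lemma fix_open_subgroup:
  assumes K: "K \<subseteq> UF F" and X: "finite X" and sub: "FixU X \<subseteq> K"
  shows "open_subgroup_of K (FixU X)"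
  unfolding open_subgroup_of_def
proof (intro conjI)
  show "FixU X \<subseteq> K" by (rule sub)
  show "subgroup (FixU X) aut_group" by (rule FixU_subgroup)
  have "FixU X = {f. \<forall>x\<in>X. f x = x} \<inter> K" using K sub by (auto simp: FixU_def)
  then show "openin (subtopology perm_top K) (FixU X)"
    using open_fix[OF X] unfolding openin_subtopology by blast
qed

end



definition NS :: "'a list set \<Rightarrow> 'a list set" where
  "NS S = S \<union> (\<Union>x\<in>S. range (nbr x))"

lemma finite_NS: "finite S \<Longrightarrow> finite (NS (S :: ('a::finite) list set))"
  by (simp add: NS_def)

context permgrp begin

lemma FixU_mono: "X \<subseteq> Y \<Longrightarrow> FixU Y \<subseteq> FixU X"
  by (auto simp: FixU_def)

lemma conj_UF:
  assumes g: "g \<in> Aut" and exc: "\<And>w. w \<in> TV \<Longrightarrow> w \<notin> S \<Longrightarrow> sigma g w \<in> F"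
    and k: "k \<in> UF F" and fx: "\<And>x. x \<in> NS S \<Longrightarrow> k x = x"
  shows "g \<circ> k \<circ> hinv g \<in> UF F"
proof -
  have ka: "k \<in> Aut" using k by (simp add: UF_def)
  have gi: "hinv g \<in> Aut" by (rule inv_Aut[OF g])
  have bg: "bij g" by (rule aut_bij[OF g])
  have bk: "bij k" by (rule aut_bij[OF ka])
  have "sigma (g \<circ> k \<circ> hinv g) v \<in> F" if v: "v \<in> TV" for v
  proof -
    define w where "w = hinv g v"
    have w: "w \<in> TV" unfolding w_def using aut_TV[OF gi v] .
    have gw: "g w = v" unfolding w_def using bg by (simp add: bij_is_surj surj_f_inv_f)
    have kw: "k w \<in> TV" using aut_TV[OF ka w] .
    have "sigma (g \<circ> k \<circ> hinv g) v = sigma (g \<circ> k) w \<circ> sigma (hinv g) v"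
      using sigma_comp[OF gi v, of "g \<circ> k"] by (simp add: w_def)
    also have "\<dots> = sigma g (k w) \<circ> sigma k w \<circ> sigma (hinv g) (g w)"
      using sigma_comp[OF ka w, of g] gw by simp
    finally have eq: "sigma (g \<circ> k \<circ> hinv g) v = sigma g (k w) \<circ> sigma k w \<circ> sigma (hinv g) (g w)" .
    show ?thesis
    proof (cases "w \<in> S")
      case True
      then have kw': "k w = w" using fx by (simp add: NS_def)
      have "k (nbr w b) = nbr (k w) (id b)" for b
      proof -
        have "nbr w b \<in> NS S" using True unfolding NS_def by blast
        then show ?thesis using fx kw' by simp
      qed
      then have "sigma k w = id" by (rule sigma_eqI)
      then have "sigma (g \<circ> k \<circ> hinv g) v = id" using eq kw' sigma_inv(2)[OF g w] by simp
      then show ?thesis using F_id by simp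
    next
      case False
      have "k w \<notin> S"
      proof
        assume "k w \<in> S"
        then have "k (k w) = k w" using fx by (simp add: NS_def)
        then have "k w = w" using bk by (simp add: bij_is_inj inj_eq)
        then show False using False \<open>k w \<in> S\<close> by simp
      qed
      then have 1: "sigma g (k w) \<in> F" using exc kw by blast
      have 2: "sigma k w \<in> F" using k w by (simp add: UF_def)
      have 3: "sigma (hinv g) (g w) \<in> F"
        using exc[OF w False] F_inv sigma_inv'(1)[OF g w] by simp
      show ?thesis using eq F_comp[OF F_comp[OF 1 2] 3] by simp
    qed
  qed
  then show ?thesis using comp_Aut[OF comp_Aut[OF g ka] gi] by (simp add: UF_def)
qed

lemma GFF_sub_Comm:
  assumes K: "compact_open_subgroup_UF F K" and g: "g \<in> GFF F F'"
  shows "g \<in> Comm (UF F') K"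
proof -
  have gU': "g \<in> UF F'" using g by (simp add: GFF_def)
  have ga: "g \<in> Aut" using g by (simp add: GFF_def GF_def)
  have gi: "hinv g \<in> Aut" by (rule inv_Aut[OF ga])
  have bg: "bij g" by (rule aut_bij[OF ga])
  have ginvg: "\<And>x. g (hinv g x) = x" using bg by (simp add: bij_is_surj surj_f_inv_f)
  have invgg: "\<And>x. hinv g (g x) = x" using bg by (simp add: bij_is_inj)
  define S where "S = {v \<in> TV. sigma g v \<notin> F}"
  have fS: "finite S" using g by (simp add: GFF_def GF_def S_def)
  have KU: "K \<subseteq> UF F" and Ksg: "subgroup K aut_group"
    and Ko: "openin (subtopology perm_top (UF F)) K"
    using K by (simp_all add: compact_open_subgroup_UF_def)
  have "id \<in> K" using subgroup.one_closed[OF Ksg] by (simp add: aut_one)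
  then obtain X0 where X0: "finite X0" "{f \<in> UF F. \<forall>x\<in>X0. f x = x} \<subseteq> K"
    using extract_fix[OF Ko] by blast
  have FX0: "FixU X0 \<subseteq> K" using X0(2) by (simp add: FixU_def)
  define B where "B = NS S \<union> X0 \<union> hinv g ` X0 \<union> hinv g ` NS (g ` S)"
  have fB: "finite B" unfolding B_def using fS X0(1) finite_NS[OF fS] finite_NS[of "g ` S"] by simp
  have fgB: "finite (g ` B)" using fB by simp
  have X0B: "X0 \<subseteq> B" and X0gB: "X0 \<subseteq> g ` B"
    unfolding B_def using ginvg by (auto intro: image_eqI[where x="hinv g _"])
  have K1: "open_subgroup_of K (FixU B)"
    using fix_open_subgroup[OF KU fB] FixU_mono[OF X0B] FX0 by blast
  have K2: "open_subgroup_of K (FixU (g ` B))"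
    using fix_open_subgroup[OF KU fgB] FixU_mono[OF X0gB] FX0 by blast
  have exc: "\<And>w. w \<in> TV \<Longrightarrow> w \<notin> S \<Longrightarrow> sigma g w \<in> F" by (auto simp: S_def)
  have exc': "sigma (hinv g) w \<in> F" if w: "w \<in> TV" "w \<notin> g ` S" for w
  proof -
    have w': "hinv g w \<in> TV" using aut_TV[OF gi w(1)] .
    have "hinv g w \<notin> S" using w(2) ginvg by (metis image_eqI)
    then have "sigma g (hinv g w) \<in> F" using exc w' by blast
    then show ?thesis using sigma_inv_any[OF ga w(1)] F_inv by simp
  qed
  have img: "(\<lambda>k. g \<otimes>\<^bsub>aut_group\<^esub> k \<otimes>\<^bsub>aut_group\<^esub> inv\<^bsub>aut_group\<^esub> g) ` FixU B = FixU (g ` B)"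
  proof (intro equalityI subsetI)
    fix h assume "h \<in> (\<lambda>k. g \<otimes>\<^bsub>aut_group\<^esub> k \<otimes>\<^bsub>aut_group\<^esub> inv\<^bsub>aut_group\<^esub> g) ` FixU B"
    then obtain k where k: "k \<in> FixU B" and h: "h = g \<otimes>\<^bsub>aut_group\<^esub> k \<otimes>\<^bsub>aut_group\<^esub> inv\<^bsub>aut_group\<^esub> g"
      by blast
    have kU: "k \<in> UF F" using k by (simp add: FixU_def)
    have ka: "k \<in> Aut" using kU by (simp add: UF_def)
    have h': "h = g \<circ> k \<circ> hinv g"
      using h by (simp add: aut_inv[OF ga] aut_mult[OF ga ka] aut_mult[OF comp_Aut[OF ga ka] gi])
    have fx: "k x = x" if "x \<in> NS S" for x using k that by (simp add: FixU_def B_def)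
    have "h \<in> UF F" using conj_UF[OF ga exc kU fx] h' by simp
    moreover have "h y = y" if "y \<in> g ` B" for y
    proof -
      obtain b where b: "b \<in> B" "y = g b" using \<open>y \<in> g ` B\<close> by blast
      have "k b = b" using k b(1) by (simp add: FixU_def)
      then show ?thesis using b(2) h' invgg by simp
    qed
    ultimately show "h \<in> FixU (g ` B)" by (simp add: FixU_def)
  next
    fix h assume h: "h \<in> FixU (g ` B)"
    have hU: "h \<in> UF F" using h by (simp add: FixU_def)
    have ha: "h \<in> Aut" using hU by (simp add: UF_def)
    have hfix: "\<And>y. y \<in> g ` B \<Longrightarrow> h y = y" using h unfolding FixU_def by blast
    have fx: "h x = x" if "x \<in> NS (g ` S)" for x
    proof -
      have "hinv g x \<in> B" using that by (simp add: B_def)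
      then have "g (hinv g x) \<in> g ` B" by blast
      then show ?thesis using hfix ginvg by simp
    qed
    have "hinv g \<circ> h \<circ> hinv (hinv g) \<in> UF F"
      by (rule conj_UF[OF gi exc' hU fx]) auto
    then have kU: "hinv g \<circ> h \<circ> g \<in> UF F" using bg by (simp add: inv_inv_eq)
    define k where "k = hinv g \<circ> h \<circ> g"
    have ka: "k \<in> Aut" using kU by (simp add: UF_def k_def)
    have "k b = b" if "b \<in> B" for b
    proof -
      have "h (g b) = g b" using hfix that by blast
      then show ?thesis by (simp add: k_def invgg)
    qed
    then have kB: "k \<in> FixU B" using kU by (simp add: FixU_def k_def)
    have "g \<otimes>\<^bsub>aut_group\<^esub> k \<otimes>\<^bsub>aut_group\<^esub> inv\<^bsub>aut_group\<^esub> g = g \<circ> k \<circ> hinv g"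
      by (simp add: aut_inv[OF ga] aut_mult[OF ga ka] aut_mult[OF comp_Aut[OF ga ka] gi])
    also have "\<dots> = h" by (rule ext) (simp add: k_def ginvg)
    finally show "h \<in> (\<lambda>k. g \<otimes>\<^bsub>aut_group\<^esub> k \<otimes>\<^bsub>aut_group\<^esub> inv\<^bsub>aut_group\<^esub> g) ` FixU B"
      using kB by (metis image_eqI)
  qed
  show ?thesis unfolding Comm_def using gU' K1 K2 img by blast
qed

end



definition kf :: "'a list \<Rightarrow> ('a \<Rightarrow> 'a) \<Rightarrow> 'a list \<Rightarrow> 'a list" where
  "kf v f w = (if (\<exists>x. w = v @ x) \<and> w \<in> TV then v @ map f (drop (length v) w) else w)"

lemma kf_app: "v @ x \<in> TV \<Longrightarrow> kf v f (v @ x) = v @ map f x"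
  by (auto simp: kf_def)

lemma kf_not: "\<not> (\<exists>x. w = v @ x) \<Longrightarrow> kf v f w = w"
  by (auto simp: kf_def)

lemma kf_out: "w \<notin> TV \<Longrightarrow> kf v f w = w"
  by (auto simp: kf_def)

lemma red_map:
  assumes "reduced (v @ x)" "v \<noteq> []" "inj f" "f (last v) = last v"
  shows "reduced (v @ map f x) \<and> last (v @ map f x) = f (last (v @ x))"
  using assms(1)
proof (induction x rule: rev_induct)
  case Nil
  then show ?case using assms by simp
next
  case (snoc b x)
  have r: "reduced (v @ x)" and ne: "last (v @ x) \<noteq> b"
    using snoc.prems reduced_snoc[of "v @ x" b] assms(2) by auto
  have IH: "reduced (v @ map f x)" "last (v @ map f x) = f (last (v @ x))" using snoc.IH r by auto
  have "f (last (v @ x)) \<noteq> f b" using ne assms(3) by (simp add: inj_eq)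
  then have "reduced ((v @ map f x) @ [f b])" using IH reduced_snoc[of "v @ map f x" "f b"] by simp
  then show ?case by simp
qed

locale kfloc =
  fixes v :: "'a list" and f :: "'a \<Rightarrow> 'a"
  assumes v: "v \<in> TV" and ne: "v \<noteq> []" and bf: "bij f" and fa: "f (last v) = last v"
begin

lemma injf: "inj f" using bf by (simp add: bij_is_inj)

lemma kf_TV: "w \<in> TV \<Longrightarrow> kf v f w \<in> TV"
proof (cases "\<exists>x. w = v @ x")
  case True
  assume w: "w \<in> TV"
  then obtain x where x: "w = v @ x" using True by blast
  then have "reduced (v @ map f x)" using red_map[of v x f] w ne injf fa by (simp add: TV_def)
  then show ?thesis using x w by (simp add: kf_app TV_def)
next
  case False
  assume "w \<in> TV" then show ?thesis using False by (simp add: kf_not)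
qed

lemma kf_nbr:
  assumes w: "w \<in> TV"
  shows "kf v f (nbr w b) = nbr (kf v f w) (if (\<exists>x. w = v @ x) then f b else b)"
proof (cases "\<exists>x. w = v @ x")
  case True
  then obtain x where x: "w = v @ x" by blast
  have kw: "kf v f w = v @ map f x" using x w by (simp add: kf_app)
  have wne: "w \<noteq> []" using x ne by simp
  show ?thesis
  proof (cases "last w = b")
    case lb: True
    then have nb: "nbr w b = butlast w" using wne by (simp add: nbr_def)
    show ?thesis
    proof (cases "x = []")
      case True
      then have wv: "w = v" using x by simp
      have "\<not> (\<exists>y. butlast v = v @ y)"
      proof
        assume "\<exists>y. butlast v = v @ y"
        then obtain y where "butlast v = v @ y" by blast
        then have "length (butlast v) \<ge> length v" by simp
        moreover have "length (butlast v) = length v - 1" by simp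
        moreover have "length v > 0" using ne by simp
        ultimately show False by linarith
      qed
      then have "kf v f (butlast v) = butlast v" by (rule kf_not)
      moreover have "kf v f v = v" using kf_app[of v "[]" f] v by simp
      ultimately show ?thesis using nb wv lb fa ne by (simp add: nbr_def x)
    next
      case False
      have bw: "butlast w = v @ butlast x" using x False by (simp add: butlast_append)
      have "butlast w \<in> TV" using w by (simp add: TV_def reduced_butlast)
      then have "kf v f (butlast w) = v @ map f (butlast x)" using bw by (simp add: kf_app)
      moreover have "last (kf v f w) = f b" using kw False lb x by (simp add: last_map)
      moreover have "butlast (kf v f w) = v @ map f (butlast x)" using kw False by (simp add: butlast_append map_butlast)
      ultimately show ?thesis using nb True kw ne by (simp add: nbr_def)
    qed
  next
    case lb: False
    then have nb: "nbr w b = w @ [b]" by (simp add: nbr_def)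
    have inTV: "v @ (x @ [b]) \<in> TV" using nbr_TV[OF w, of b] nb x by simp
    have "kf v f (nbr w b) = v @ map f x @ [f b]" using nb x kf_app[OF inTV] by simp
    moreover have "last (kf v f w) \<noteq> f b"
    proof -
      have "last (v @ map f x) = f (last (v @ x))" using red_map[of v x f] w x ne injf fa by (simp add: TV_def)
      then show ?thesis using kw lb x injf by (simp add: inj_eq)
    qed
    ultimately show ?thesis using True kw by (simp add: nbr_def)
  qed
next
  case False
  have kw: "kf v f w = w" using False by (rule kf_not)
  show ?thesis
  proof (cases "w \<noteq> [] \<and> last w = b")
    case True
    then have nb: "nbr w b = butlast w" by (simp add: nbr_def)
    have "\<not> (\<exists>y. butlast w = v @ y)"
    proof
      assume "\<exists>y. butlast w = v @ y"
      then obtain y where "butlast w = v @ y" by blast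
      then have "w = v @ (y @ [last w])" using True append_butlast_last_id[of w] by simp
      then show False using False by blast
    qed
    then show ?thesis using nb kw False by (simp add: kf_not)
  next
    case lb: False
    then have nb: "nbr w b = w @ [b]" by (auto simp: nbr_def)
    show ?thesis
    proof (cases "\<exists>y. w @ [b] = v @ y")
      case True
      then obtain y where y: "w @ [b] = v @ y" by blast
      have "y = []"
      proof (rule ccontr)
        assume "y \<noteq> []"
        then have "w = v @ butlast y" using y
          by (metis butlast_append butlast_snoc)
        then show False using False by blast
      qed
      then have "w @ [b] = v" using y by simp
      then have "kf v f (w @ [b]) = w @ [b]" using kf_app[of v "[]" f] v by simp
      then show ?thesis using nb kw False by simp
    next
      case False2: False
      then show ?thesis using nb kw False by (simp add: kf_not)
    qed
  qed
qed

lemma kf_inv: "kf v (hinv f) (kf v f w) = w"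
proof -
  have fa': "hinv f (last v) = last v" using fa bf by (metis bij_is_inj inv_f_f)
  show ?thesis
  proof (cases "(\<exists>x. w = v @ x) \<and> w \<in> TV")
    case True
    then obtain x where x: "w = v @ x" and w: "w \<in> TV" by blast
    have k: "kf v f w = v @ map f x" using x w by (simp add: kf_app)
    have "kf v f w \<in> TV" using kf_TV w by blast
    then have "kf v (hinv f) (kf v f w) = v @ map (hinv f) (map f x)" using k by (simp add: kf_app)
    also have "\<dots> = w" using x injf by (simp add: comp_def)
    finally show ?thesis .
  next
    case False
    then have "kf v f w = w" by (auto simp: kf_def)
    then show ?thesis using False by (auto simp: kf_def)
  qed
qed

end

lemma kfloc_inv: "kfloc v f \<Longrightarrow> kfloc v (hinv f)"
  unfolding kfloc_def by (metis bij_imp_bij_inv bij_is_inj inv_f_f)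

lemma kf_Aut: assumes "kfloc v f" shows "kf v f \<in> Aut"
proof -
  interpret A: kfloc v f by (rule assms)
  interpret B: kfloc v "hinv f" by (rule kfloc_inv[OF assms])
  have inv2: "hinv (hinv f) = f" using A.bf by (simp add: inv_inv_eq)
  have adj: "tadj (kf v h u) (kf v h w)" if kh: "kfloc v h" and uw: "u \<in> TV" "w \<in> TV" "tadj u w" for h u w
  proof -
    interpret C: kfloc v h by (rule kh)
    obtain b where "w = nbr u b" using tadj_nbr uw by blast
    then have "kf v h w = nbr (kf v h u) (if (\<exists>x. u = v @ x) then h b else b)" using C.kf_nbr uw(1) by simp
    then show ?thesis using tadj_nbr[OF C.kf_TV[OF uw(1)] C.kf_TV[OF uw(2)]] by blast
  qed
  show ?thesis
  proof (rule AutI[where h="kf v (hinv f)"])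
    show "kf v (hinv f) (kf v f x) = x" for x by (rule A.kf_inv)
    show "kf v f (kf v (hinv f) x) = x" for x using B.kf_inv[of x] inv2 by simp
    show "x \<in> TV \<Longrightarrow> kf v f x \<in> TV" for x by (rule A.kf_TV)
    show "x \<in> TV \<Longrightarrow> kf v (hinv f) x \<in> TV" for x by (rule B.kf_TV)
    show "x \<notin> TV \<Longrightarrow> kf v f x = x" for x by (rule kf_out)
    show "u \<in> TV \<Longrightarrow> w \<in> TV \<Longrightarrow> tadj u w \<Longrightarrow> tadj (kf v f u) (kf v f w)" for u w
      using adj[OF assms] by blast
    show "u \<in> TV \<Longrightarrow> w \<in> TV \<Longrightarrow> tadj u w \<Longrightarrow> tadj (kf v (hinv f) u) (kf v (hinv f) w)" for u w
      using adj[OF kfloc_inv[OF assms]] by blast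
  qed
qed

lemma kf_sigma: assumes "kfloc v f" "w \<in> TV"
  shows "sigma (kf v f) w = (if (\<exists>x. w = v @ x) then f else id)"
proof -
  interpret A: kfloc v f by (rule assms)
  show ?thesis by (rule sigma_eqI) (simp add: A.kf_nbr[OF assms(2)])
qed



lemma normalizer_step:
  assumes sgF: "subgroup F (BijGroup (UNIV :: ('a::finite) set))"
    and sgF': "subgroup F' (BijGroup (UNIV :: 'a set))"
    and FF': "F \<subseteq> F'" and hat: "F' \<subseteq> hatF F"
    and norm: "\<forall>a. normalizer_in (stab F' a) (stab F a) = stab F a"
    and p: "p \<in> F'" and conj: "\<And>f. f \<in> stab F a \<Longrightarrow> p \<circ> f \<circ> hinv p \<in> F"
  shows "p \<in> F"
proof -
  interpret P: permgrp F by (rule permgrp.intro[OF sgF])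
  interpret P': permgrp F' by (rule permgrp.intro[OF sgF'])
  obtain f0 where f0: "f0 \<in> F" "p a = f0 a" using hat p by (auto simp: hatF_def)
  have bp: "bij p" using P'.F_bij[OF p] .
  have bf0: "bij f0" using P.F_bij[OF f0(1)] .
  define q where "q = hinv f0 \<circ> p"
  have qF': "q \<in> F'" unfolding q_def using P'.F_comp[OF P'.F_inv p] f0(1) FF' by blast
  have bq: "bij q" using P'.F_bij[OF qF'] .
  have qa: "q a = a" unfolding q_def using f0(2) bf0 by (simp add: bij_is_inj)
  have qia: "hinv q a = a" using qa bq by (metis bij_is_inj inv_f_f)
  have hq: "hinv q = hinv p \<circ> f0" unfolding q_def
    using o_inv_distrib[OF bij_imp_bij_inv[OF bf0] bp] bf0 by (simp add: inv_inv_eq)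
  have sub: "(\<lambda>f. q \<circ> f \<circ> hinv q) ` stab F a \<subseteq> stab F a"
  proof
    fix h assume "h \<in> (\<lambda>f. q \<circ> f \<circ> hinv q) ` stab F a"
    then obtain f where f: "f \<in> stab F a" "h = q \<circ> f \<circ> hinv q" by blast
    have "h = q \<circ> f \<circ> (hinv p \<circ> f0)" using f(2) hq by simp
    then have "h = hinv f0 \<circ> (p \<circ> f \<circ> hinv p) \<circ> f0" by (simp add: q_def comp_assoc)
    then have "h \<in> F" using P.F_comp[OF P.F_comp[OF P.F_inv[OF f0(1)] conj[OF f(1)]] f0(1)] by simp
    moreover have "h a = a" using f qa qia by (simp add: stab_def)
    ultimately show "h \<in> stab F a" by (simp add: stab_def)
  qed
  have inj: "inj_on (\<lambda>f. q \<circ> f \<circ> hinv q) (stab F a)"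
  proof (rule inj_onI)
    fix f1 f2 assume "q \<circ> f1 \<circ> hinv q = q \<circ> f2 \<circ> hinv q"
    then have "hinv q \<circ> (q \<circ> f1 \<circ> hinv q) \<circ> q = hinv q \<circ> (q \<circ> f2 \<circ> hinv q) \<circ> q" by simp
    moreover have "hinv q \<circ> (q \<circ> f \<circ> hinv q) \<circ> q = f" for f
      using bq by (simp add: fun_eq_iff bij_is_inj bij_is_surj surj_f_inv_f)
    ultimately show "f1 = f2" by simp
  qed
  have fin: "finite (stab F a)" by simp
  have "(\<lambda>f. q \<circ> f \<circ> hinv q) ` stab F a = stab F a"
    using card_subset_eq[OF fin sub] card_image[OF inj] by simp
  then have "q \<in> normalizer_in (stab F' a) (stab F a)"
    using qF' qa by (simp add: normalizer_in_def stab_def)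
  then have "q \<in> F" using norm by (simp add: stab_def)
  moreover have "p = f0 \<circ> q" unfolding q_def using bf0
    by (simp add: fun_eq_iff bij_is_surj surj_f_inv_f)
  ultimately show ?thesis using P.F_comp[OF f0(1)] by simp
qed

lemma finite_prefixes: "finite X \<Longrightarrow> finite {v. \<exists>s\<in>X. \<exists>x. s = v @ x}"
proof -
  assume X: "finite X"
  have "{v. \<exists>s\<in>X. \<exists>x. s = v @ x} \<subseteq> (\<Union>s\<in>X. (\<lambda>n. take n s) ` {..length s})"
  proof
    fix v assume "v \<in> {v. \<exists>s\<in>X. \<exists>x. s = v @ x}"
    then obtain s x where "s \<in> X" "s = v @ x" by blast
    then show "v \<in> (\<Union>s\<in>X. (\<lambda>n. take n s) ` {..length s})"
      by (intro UN_I[of s]) (auto intro!: image_eqI[of _ _ "length v"])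
  qed
  moreover have "finite (\<Union>s\<in>X. (\<lambda>n. take n s) ` {..length s})" using X by simp
  ultimately show ?thesis by (rule finite_subset)
qed

lemma Comm_sub_GFF:
  assumes sgF: "subgroup F (BijGroup (UNIV :: ('a::finite) set))"
    and sgF': "subgroup F' (BijGroup (UNIV :: 'a set))"
    and FF': "F \<subseteq> F'" and hat: "F' \<subseteq> hatF F"
    and norm: "\<forall>a. normalizer_in (stab F' a) (stab F a) = stab F a"
    and K: "compact_open_subgroup_UF F K"
    and g: "g \<in> Comm (UF F') K"
  shows "g \<in> GFF F F'"
proof -
  interpret P: permgrp F by (rule permgrp.intro[OF sgF])
  interpret P': permgrp F' by (rule permgrp.intro[OF sgF'])
  have gU': "g \<in> UF F'" using g by (simp add: Comm_def)
  have ga: "g \<in> Aut" using gU' by (simp add: UF_def)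
  have gi: "hinv g \<in> Aut" by (rule inv_Aut[OF ga])
  have bg: "bij g" by (rule aut_bij[OF ga])
  obtain K1 K2 where K1: "open_subgroup_of K K1" and K2: "open_subgroup_of K K2"
    and img: "(\<lambda>k. g \<otimes>\<^bsub>aut_group\<^esub> k \<otimes>\<^bsub>aut_group\<^esub> inv\<^bsub>aut_group\<^esub> g) ` K1 = K2"
    using g unfolding Comm_def by blast
  have KU: "K \<subseteq> UF F" and Ksg: "subgroup K aut_group"
    and Ko: "openin (subtopology perm_top (UF F)) K"
    using K by (simp_all add: compact_open_subgroup_UF_def)
  have "id \<in> K" using subgroup.one_closed[OF Ksg] by (simp add: aut_one)
  then obtain X0 where X0: "finite X0" "{f \<in> UF F. \<forall>x\<in>X0. f x = x} \<subseteq> K"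
    using extract_fix[OF Ko] by blast
  have "id \<in> K1" using subgroup.one_closed[of K1 aut_group] K1
    by (simp add: open_subgroup_of_def aut_one)
  then obtain X1 where X1: "finite X1" "{f \<in> K. \<forall>x\<in>X1. f x = x} \<subseteq> K1"
    using extract_fix[of K K1] K1 by (auto simp: open_subgroup_of_def)
  define X where "X = X0 \<union> X1"
  have FX: "P.FixU X \<subseteq> K1" using X0(2) X1(2) by (auto simp: P.FixU_def X_def)
  define P0 where "P0 = {v. \<exists>s\<in>X. \<exists>x. s = v @ x}"
  have fP0: "finite P0" unfolding P0_def by (rule finite_prefixes) (simp add: X_def X0(1) X1(1))
  have K2U: "K2 \<subseteq> UF F" using K2 KU by (auto simp: open_subgroup_of_def)
  have key: "sigma g v \<in> F" if v: "v \<in> TV" "v \<noteq> []" "v \<notin> P0" for v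
  proof -
    define a where "a = last v"
    define p where "p = sigma g v"
    have pF': "p \<in> F'" using gU' v(1) by (simp add: UF_def p_def)
    have conj: "p \<circ> f \<circ> hinv p \<in> F" if f: "f \<in> stab F a" for f
    proof -
      have kl: "kfloc v f" using f v P.F_bij by (unfold_locales) (auto simp: stab_def a_def)
      define k where "k = kf v f"
      have ka: "k \<in> Aut" using kf_Aut[OF kl] by (simp add: k_def)
      have "sigma k w \<in> F" if "w \<in> TV" for w
        using kf_sigma[OF kl that] f P.F_id by (simp add: k_def stab_def)
      then have kU: "k \<in> UF F" using ka by (simp add: UF_def)
      have "k s = s" if "s \<in> X" for s
      proof -
        have "\<not> (\<exists>x. s = v @ x)" using v(3) that by (auto simp: P0_def)
        then show ?thesis by (simp add: k_def kf_not)
      qed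
      then have "k \<in> P.FixU X" using kU by (simp add: P.FixU_def)
      then have "k \<in> K1" using FX by blast
      then have "g \<otimes>\<^bsub>aut_group\<^esub> k \<otimes>\<^bsub>aut_group\<^esub> inv\<^bsub>aut_group\<^esub> g \<in> K2" using img by blast
      moreover have "g \<otimes>\<^bsub>aut_group\<^esub> k \<otimes>\<^bsub>aut_group\<^esub> inv\<^bsub>aut_group\<^esub> g = g \<circ> k \<circ> hinv g"
        by (simp add: aut_inv[OF ga] aut_mult[OF ga ka] aut_mult[OF comp_Aut[OF ga ka] gi])
      ultimately have "g \<circ> k \<circ> hinv g \<in> UF F" using K2U by auto
      then have s1: "sigma (g \<circ> k \<circ> hinv g) (g v) \<in> F" using aut_TV[OF ga v(1)] by (simp add: UF_def)
      have kv: "k v = v" using kf_app[of v "[]" f] v(1) by (simp add: k_def)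
      have sk: "sigma k v = f" using kf_sigma[OF kl v(1)] by (simp add: k_def)
      have "sigma (g \<circ> k \<circ> hinv g) (g v) = sigma (g \<circ> k) (hinv g (g v)) \<circ> sigma (hinv g) (g v)"
        by (rule sigma_comp[OF gi aut_TV[OF ga v(1)]])
      also have "\<dots> = sigma (g \<circ> k) v \<circ> hinv p"
        using bg sigma_inv'(1)[OF ga v(1)] by (simp add: bij_is_inj p_def)
      also have "\<dots> = p \<circ> f \<circ> hinv p"
        using sigma_comp[OF ka v(1), of g] kv sk by (simp add: p_def)
      finally show ?thesis using s1 by simp
    qed
    show ?thesis using normalizer_step[OF sgF sgF' FF' hat norm pF' conj] by (simp add: p_def)
  qed
  have "{v \<in> TV. sigma g v \<notin> F} \<subseteq> insert [] P0" using key by blast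
  then have "finite {v \<in> TV. sigma g v \<notin> F}" using fP0 finite_subset by blast
  then show ?thesis using gU' ga by (simp add: GFF_def GF_def)
qed

theorem proposition1p8:
  fixes F F' :: "('a::finite \<Rightarrow> 'a) set"
  assumes "CARD('a) \<ge> 3"
    and "subgroup F (BijGroup (UNIV :: 'a set))"
    and "subgroup F' (BijGroup (UNIV :: 'a set))"
    and "F \<subseteq> F'" and "F' \<subseteq> hatF F"
    and "\<forall>a. normalizer_in (stab F' a) (stab F a) = stab F a"
    and "compact_open_subgroup_UF F K"
  shows "Comm (UF F') K = GFF F F'"
proof -
  interpret P: permgrp F by (rule permgrp.intro[OF assms(2)])
  show ?thesis
  proof (intro equalityI subsetI)
    fix g assume "g \<in> Comm (UF F') K"
    then show "g \<in> GFF F F'" using Comm_sub_GFF[OF assms(2-7)] by blast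
  next
    fix g assume "g \<in> GFF F F'"
    then show "g \<in> Comm (UF F') K" using P.GFF_sub_Comm[OF assms(7)] by blast
  qed
qed


end
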